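(* Let $H_1,\dots,H_s$ be graphs with cores $C_1,\dots,C_s$, and suppose there is a homomorphism from $H_j$ to $H_{j+1}$ for every $j=1,\dots,s$ (indices modulo $s$). Then $C_1,\dots,C_s$ are all isomorphic to a common graph $C$, and $H_1,\dots,H_s$ all have the same $C$-covering number.
   Context: A homomorphism $F\to F'$ is a vertex map sending edges to edges. A subgraph $C$ of $H$ is a core of $H$ if there is a homomorphism $H\to C$ but none from $H$ to a proper subgraph of $C$. A copy of $C$ in $F$ is a (not necessarily induced) subgraph of $F$ isomorphic to $C$. For a graph $F$ and a $c$-vertex graph $C$, a $C$-coloring of $F$ is a map $f:V(F)\to\{1,\dots,c\}$ such that the vertices of every copy of $C$ in $F$ receive pairwise distinct colors; $F$ is $C$-colorable if it has one. If $C$ is the core of $H$, a $C$-covering of $H$ of size $r$ is a collection $C_1,\dots,C_r\subseteq V(H)$ such that every copy of $C$ in $H$ lies in the subgraph induced by some $C_i$, and each induced subgraph $H[C_i]$ is $C$-colorable. The $C$-covering number of $H$ is the minimum size of a $C$-covering of $H$. *)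

theory Defs
  imports Main
begin

record 'a ugraph =
  verts :: "'a set"
  edges :: "'a set set"

definition wf_graph :: "'a ugraph \<Rightarrow> bool" where
  "wf_graph G \<longleftrightarrow> finite (verts G) \<and>
     (\<forall>e\<in>edges G. \<exists>u v. e = {u, v} \<and> u \<noteq> v \<and> u \<in> verts G \<and> v \<in> verts G)"

definition graph_hom :: "'a ugraph \<Rightarrow> 'b ugraph \<Rightarrow> ('a \<Rightarrow> 'b) \<Rightarrow> bool" where
  "graph_hom F F' f \<longleftrightarrow> f ` verts F \<subseteq> verts F' \<and>
     (\<forall>u v. {u, v} \<in> edges F \<longrightarrow> {f u, f v} \<in> edges F')"

definition homomorphic :: "'a ugraph \<Rightarrow> 'b ugraph \<Rightarrow> bool" where
  "homomorphic F F' \<longleftrightarrow> (\<exists>f. graph_hom F F' f)"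

definition graph_iso :: "'a ugraph \<Rightarrow> 'b ugraph \<Rightarrow> bool" where
  "graph_iso F F' \<longleftrightarrow> (\<exists>f. bij_betw f (verts F) (verts F') \<and>
     (\<forall>u\<in>verts F. \<forall>v\<in>verts F. {u, v} \<in> edges F \<longleftrightarrow> {f u, f v} \<in> edges F'))"

definition subgraph :: "'a ugraph \<Rightarrow> 'a ugraph \<Rightarrow> bool" where
  "subgraph C H \<longleftrightarrow> wf_graph C \<and> verts C \<subseteq> verts H \<and> edges C \<subseteq> edges H"

definition is_core :: "'a ugraph \<Rightarrow> 'a ugraph \<Rightarrow> bool" where
  "is_core C H \<longleftrightarrow> subgraph C H \<and> homomorphic H C \<and>
     \<not> (\<exists>C'. subgraph C' C \<and> C' \<noteq> C \<and> homomorphic H C')"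

definition is_copy :: "'b ugraph \<Rightarrow> 'a ugraph \<Rightarrow> 'a ugraph \<Rightarrow> bool" where
  "is_copy C F K \<longleftrightarrow> subgraph K F \<and> graph_iso K C"

definition C_coloring :: "'b ugraph \<Rightarrow> 'a ugraph \<Rightarrow> ('a \<Rightarrow> nat) \<Rightarrow> bool" where
  "C_coloring C F f \<longleftrightarrow> f ` verts F \<subseteq> {1..card (verts C)} \<and>
     (\<forall>K. is_copy C F K \<longrightarrow> inj_on f (verts K))"

definition C_colorable :: "'b ugraph \<Rightarrow> 'a ugraph \<Rightarrow> bool" where
  "C_colorable C F \<longleftrightarrow> (\<exists>f. C_coloring C F f)"

definition induced :: "'a ugraph \<Rightarrow> 'a set \<Rightarrow> 'a ugraph" where
  "induced H S = \<lparr>verts = S, edges = {e \<in> edges H. e \<subseteq> S}\<rparr>"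

definition C_covering :: "'b ugraph \<Rightarrow> 'a ugraph \<Rightarrow> (nat \<Rightarrow> 'a set) \<Rightarrow> nat \<Rightarrow> bool" where
  "C_covering C H X r \<longleftrightarrow>
     (\<forall>i<r. X i \<subseteq> verts H \<and> C_colorable C (induced H (X i))) \<and>
     (\<forall>K. is_copy C H K \<longrightarrow> (\<exists>i<r. subgraph K (induced H (X i))))"

definition covering_number :: "'b ugraph \<Rightarrow> 'a ugraph \<Rightarrow> nat" where
  "covering_number C H = (LEAST r. \<exists>X. C_covering C H X r)"

end

theory Submission
  imports Defs
begin

definition rigid :: "'a ugraph \<Rightarrow> bool" where
  "rigid C \<longleftrightarrow> wf_graph C \<and> (\<forall>g. graph_hom C C g \<longrightarrow>
     inj_on g (verts C) \<and> g ` verts C = verts C \<and>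
     (\<forall>u\<in>verts C. \<forall>v\<in>verts C. {g u, g v} \<in> edges C \<longrightarrow> {u,v} \<in> edges C))"

lemma hom_comp: "graph_hom A B f \<Longrightarrow> graph_hom B C g \<Longrightarrow> graph_hom A C (g \<circ> f)"
  unfolding graph_hom_def
proof (intro conjI allI impI)
  assume a: "f ` verts A \<subseteq> verts B \<and> (\<forall>u v. {u, v} \<in> edges A \<longrightarrow> {f u, f v} \<in> edges B)"
     and b: "g ` verts B \<subseteq> verts C \<and> (\<forall>u v. {u, v} \<in> edges B \<longrightarrow> {g u, g v} \<in> edges C)"
  show "(g \<circ> f) ` verts A \<subseteq> verts C"
  proof
    fix y assume "y \<in> (g \<circ> f) ` verts A"
    then obtain x where "x \<in> verts A" "y = g (f x)" by auto
    then show "y \<in> verts C" using a b by blast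
  qed
  fix u v assume "{u,v} \<in> edges A"
  then show "{(g \<circ> f) u, (g \<circ> f) v} \<in> edges C" using a b by simp
qed

lemma hom_id: "graph_hom A A id"
  unfolding graph_hom_def by auto

lemma hom_sub: "subgraph C H \<Longrightarrow> graph_hom C H id"
  unfolding graph_hom_def subgraph_def by auto

lemma core_rigid:
  assumes "is_core C H"
  shows "rigid C"
proof -
  from assms obtain h where h: "graph_hom H C h" and sub: "subgraph C H"
    and nc: "\<not> (\<exists>C'. subgraph C' C \<and> C' \<noteq> C \<and> homomorphic H C')"
    unfolding is_core_def homomorphic_def by blast
  have wf: "wf_graph C" using sub unfolding subgraph_def by auto
  have fin: "finite (verts C)" using wf unfolding wf_graph_def by auto
  show ?thesis unfolding rigid_def
  proof (rule conjI[OF wf], intro allI impI)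
    fix g assume g: "graph_hom C C g"
    define C' where "C' = \<lparr>verts = g ` verts C, edges = (\<lambda>e. g ` e) ` edges C\<rparr>"
    have gV: "g ` verts C \<subseteq> verts C" using g unfolding graph_hom_def by auto
    have edgesC: "\<forall>e\<in>edges C. \<exists>u v. e = {u, v} \<and> u \<noteq> v \<and> u \<in> verts C \<and> v \<in> verts C"
      using wf unfolding wf_graph_def by auto
    have gE: "\<And>e. e \<in> edges C \<Longrightarrow> g ` e \<in> edges C"
    proof -
      fix e assume "e \<in> edges C"
      then obtain u v where "e = {u,v}" using edgesC by blast
      then show "g ` e \<in> edges C" using g \<open>e \<in> edges C\<close> unfolding graph_hom_def by auto
    qed
    have wf': "wf_graph C'"
      unfolding wf_graph_def C'_def
    proof (simp add: fin, intro ballI)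
      fix e assume "e \<in> edges C"
      then obtain u v where uv: "e = {u,v}" "u \<noteq> v" "u \<in> verts C" "v \<in> verts C" using edgesC by blast
      have "{g u, g v} \<in> edges C" using gE[OF \<open>e \<in> edges C\<close>] uv by auto
      then obtain a b where "{g u, g v} = {a,b}" "a \<noteq> b" using edgesC by blast
      then have "g u \<noteq> g v" by (auto simp: doubleton_eq_iff)
      then show "\<exists>x y. g ` e = {x, y} \<and> x \<noteq> y \<and> x \<in> g ` verts C \<and> y \<in> g ` verts C"
        using uv by auto
    qed
    have subC': "subgraph C' C" unfolding subgraph_def using wf' gV gE by (auto simp: C'_def subset_iff)
    have "graph_hom H C' (g \<circ> h)"
      unfolding graph_hom_def C'_def
    proof (intro conjI allI impI)
      show "(g \<circ> h) ` verts H \<subseteq> verts \<lparr>verts = g ` verts C, edges = (`) g ` edges C\<rparr>" using h unfolding graph_hom_def image_comp[symmetric] by (simp add: image_mono)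
    next
      fix u v assume "{u, v} \<in> edges H"
      then have "{h u, h v} \<in> edges C" using h unfolding graph_hom_def by auto
      moreover have "{g (h u), g (h v)} = g ` {h u, h v}" by auto
      ultimately show "{(g \<circ> h) u, (g \<circ> h) v} \<in> edges \<lparr>verts = g ` verts C, edges = (`) g ` edges C\<rparr>" by (simp only: ugraph.select_convs o_apply) (metis image_eqI)
    qed
    then have "C' = C" using nc subC' unfolding homomorphic_def by blast
    then have V: "g ` verts C = verts C" and E: "(\<lambda>e. g ` e) ` edges C = edges C"
      unfolding C'_def by (metis ugraph.select_convs)+
    have inj: "inj_on g (verts C)" using V fin by (simp add: eq_card_imp_inj_on)
    show "inj_on g (verts C) \<and> g ` verts C = verts C \<and>
     (\<forall>u\<in>verts C. \<forall>v\<in>verts C. {g u, g v} \<in> edges C \<longrightarrow> {u,v} \<in> edges C)"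
    proof -
     have "\<forall>u\<in>verts C. \<forall>v\<in>verts C. {g u, g v} \<in> edges C \<longrightarrow> {u,v} \<in> edges C"
     proof (intro ballI impI)
      fix u v assume u: "u \<in> verts C" and v: "v \<in> verts C" and "{g u, g v} \<in> edges C"
      then obtain e where e: "e \<in> edges C" "{g u, g v} = g ` e" using E by blast
      then obtain a b where ab: "e = {a,b}" "a \<in> verts C" "b \<in> verts C" using edgesC by blast
      have "{g u, g v} = {g a, g b}" using e ab by auto
      then have "{u,v} = {a,b}" using inj u v ab unfolding doubleton_eq_iff inj_on_def by metis
      then show "{u,v} \<in> edges C" using e ab by simp
     qed
     then show ?thesis using inj V by blast
    qed
  qed
qed


lemma wf_edge: "wf_graph G \<Longrightarrow> e \<in> edges G \<Longrightarrow> \<exists>u v. e = {u, v} \<and> u \<noteq> v \<and> u \<in> verts G \<and> v \<in> verts G"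
  unfolding wf_graph_def by blast

lemma copy_image:
  assumes rig: "rigid C0" and f: "graph_hom F F' f" and h: "graph_hom F' C0 h"
    and K: "is_copy C0 F K"
  shows "inj_on f (verts K) \<and> is_copy C0 F' \<lparr>verts = f ` verts K, edges = (`) f ` edges K\<rparr>"
proof -
  from K have subK: "subgraph K F" and iso: "graph_iso K C0" unfolding is_copy_def by auto
  from subK have wfK: "wf_graph K" and VK: "verts K \<subseteq> verts F" and EK: "edges K \<subseteq> edges F"
    unfolding subgraph_def by auto
  from iso obtain \<phi> where bij: "bij_betw \<phi> (verts K) (verts C0)"
    and ph: "\<forall>u\<in>verts K. \<forall>v\<in>verts K. {u, v} \<in> edges K \<longleftrightarrow> {\<phi> u, \<phi> v} \<in> edges C0"
    unfolding graph_iso_def by blast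
  have wf0: "wf_graph C0" using rig unfolding rigid_def by auto
  define \<psi> where "\<psi> = inv_into (verts K) \<phi>"
  have psi1: "\<And>a. a \<in> verts K \<Longrightarrow> \<psi> (\<phi> a) = a" unfolding \<psi>_def
    using bij bij_betw_inv_into_left by metis
  have psi2: "\<And>x. x \<in> verts C0 \<Longrightarrow> \<psi> x \<in> verts K \<and> \<phi> (\<psi> x) = x" unfolding \<psi>_def
    using bij by (metis bij_betw_def inv_into_into f_inv_into_f)
  have phV: "\<And>a. a \<in> verts K \<Longrightarrow> \<phi> a \<in> verts C0" using bij bij_betw_apply by metis
  have fV: "\<And>a. a \<in> verts F \<Longrightarrow> f a \<in> verts F'" using f unfolding graph_hom_def by auto
  have hV: "\<And>a. a \<in> verts F' \<Longrightarrow> h a \<in> verts C0" using h unfolding graph_hom_def by auto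
  have fE: "\<And>u v. {u,v} \<in> edges F \<Longrightarrow> {f u, f v} \<in> edges F'" using f unfolding graph_hom_def by auto
  have hE: "\<And>u v. {u,v} \<in> edges F' \<Longrightarrow> {h u, h v} \<in> edges C0" using h unfolding graph_hom_def by auto
  define g where "g = h \<circ> f \<circ> \<psi>"
  have ghom: "graph_hom C0 C0 g" unfolding graph_hom_def
  proof (intro conjI allI impI subsetI)
    fix y assume "y \<in> g ` verts C0"
    then obtain x where x: "x \<in> verts C0" "y = g x" by auto
    then show "y \<in> verts C0" using psi2[OF x(1)] VK fV hV unfolding g_def by auto
  next
    fix x y assume xy: "{x, y} \<in> edges C0"
    then obtain a b where ab: "{x,y} = {a,b}" "a \<in> verts C0" "b \<in> verts C0" using wf_edge[OF wf0] by blast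
    have "x \<in> verts C0" "y \<in> verts C0" using ab by (auto simp: doubleton_eq_iff)
    then have "{\<phi> (\<psi> x), \<phi> (\<psi> y)} \<in> edges C0" using psi2 xy by simp
    then have "{\<psi> x, \<psi> y} \<in> edges K" using ph psi2 \<open>x \<in> verts C0\<close> \<open>y \<in> verts C0\<close> by blast
    then show "{g x, g y} \<in> edges C0" using EK fE hE unfolding g_def by auto
  qed
  from rig ghom have ginj: "inj_on g (verts C0)" and gV: "g ` verts C0 = verts C0"
    and gE: "\<forall>u\<in>verts C0. \<forall>v\<in>verts C0. {g u, g v} \<in> edges C0 \<longrightarrow> {u,v} \<in> edges C0"
    unfolding rigid_def by blast+
  have hf: "\<And>a. a \<in> verts K \<Longrightarrow> h (f a) = g (\<phi> a)" unfolding g_def using psi1 by simp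
  have key: "\<And>a b. a \<in> verts K \<Longrightarrow> b \<in> verts K \<Longrightarrow> h (f a) = h (f b) \<Longrightarrow> a = b"
  proof -
    fix a b assume a: "a \<in> verts K" and b: "b \<in> verts K" and "h (f a) = h (f b)"
    then have "g (\<phi> a) = g (\<phi> b)" using hf by simp
    then have "\<phi> a = \<phi> b" using ginj phV a b unfolding inj_on_def by blast
    then show "a = b" using psi1 a b by metis
  qed
  have finj: "inj_on f (verts K)" unfolding inj_on_def using key by metis
  define K' where "K' = \<lparr>verts = f ` verts K, edges = (`) f ` edges K\<rparr>"
  have finK: "finite (verts K)" using wfK unfolding wf_graph_def by auto
  have wfK': "wf_graph K'" unfolding wf_graph_def K'_def
  proof (simp add: finK, intro ballI)
    fix e assume e: "e \<in> edges K"
    then obtain a b where ab: "e = {a,b}" "a \<noteq> b" "a \<in> verts K" "b \<in> verts K" using wf_edge[OF wfK] by blast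
    then have "f a \<noteq> f b" using finj unfolding inj_on_def by blast
    then show "\<exists>x y. f ` e = {x, y} \<and> x \<noteq> y \<and> x \<in> f ` verts K \<and> y \<in> f ` verts K" using ab by auto
  qed
  have subK': "subgraph K' F'" unfolding subgraph_def
  proof (intro conjI wfK' subsetI)
    fix x assume "x \<in> verts K'" then show "x \<in> verts F'" using VK fV unfolding K'_def by auto
  next
    fix e assume "e \<in> edges K'"
    then obtain e0 where e0: "e0 \<in> edges K" "e = f ` e0" unfolding K'_def by auto
    then obtain a b where ab: "e0 = {a,b}" using wf_edge[OF wfK] by blast
    have "{f a, f b} \<in> edges F'" using fE EK e0 ab by auto
    then show "e \<in> edges F'" using e0 ab by simp
  qed
  have EK'F: "edges K' \<subseteq> edges F'" using subK' unfolding subgraph_def by auto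
  have isoK': "graph_iso K' C0" unfolding graph_iso_def
  proof (intro exI conjI)
    show "bij_betw h (verts K') (verts C0)" unfolding bij_betw_def
    proof
      show "inj_on h (verts K')" unfolding K'_def inj_on_def using key by auto
      have "h ` verts K' = g ` \<phi> ` verts K" unfolding K'_def using hf by (auto simp: image_iff)
      also have "\<phi> ` verts K = verts C0" using bij bij_betw_def by metis
      finally show "h ` verts K' = verts C0" using gV by simp
    qed
    show "\<forall>u\<in>verts K'. \<forall>v\<in>verts K'. ({u, v} \<in> edges K') = ({h u, h v} \<in> edges C0)"
    proof (intro ballI iffI)
      fix u v assume "{u, v} \<in> edges K'" then show "{h u, h v} \<in> edges C0" using EK'F hE by auto
    next
      fix u v assume u: "u \<in> verts K'" and v: "v \<in> verts K'" and huv: "{h u, h v} \<in> edges C0"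
      obtain a where a: "a \<in> verts K" "u = f a" using u unfolding K'_def by auto
      obtain b where b: "b \<in> verts K" "v = f b" using v unfolding K'_def by auto
      have "{g (\<phi> a), g (\<phi> b)} \<in> edges C0" using huv a b hf by simp
      then have "{\<phi> a, \<phi> b} \<in> edges C0" using gE phV a b by blast
      then have "{a,b} \<in> edges K" using ph a b by blast
      then have "f ` {a,b} \<in> edges K'" unfolding K'_def by (simp only: ugraph.select_convs) (rule imageI)
      then show "{u, v} \<in> edges K'" using a b by simp
    qed
  qed
  show ?thesis using finj subK' isoK' unfolding is_copy_def K'_def by simp
qed


lemma hom_induced:
  assumes f: "graph_hom H H' f" and "f ` Y \<subseteq> X"
  shows "graph_hom (induced H Y) (induced H' X) f"
  using assms unfolding graph_hom_def induced_def by auto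

lemma hom_induced2:
  assumes h: "graph_hom H' C h" and "X \<subseteq> verts H'"
  shows "graph_hom (induced H' X) C h"
  using assms unfolding graph_hom_def induced_def by auto

lemma pullback:
  assumes rig: "rigid C0" and f: "graph_hom H H' f" and h: "graph_hom H' C0 h"
    and cov: "C_covering C0 H' X r"
  shows "C_covering C0 H (\<lambda>i. f -` X i \<inter> verts H) r"
  unfolding C_covering_def
proof (intro conjI allI impI)
  fix i assume i: "i < r"
  show "f -` X i \<inter> verts H \<subseteq> verts H" by auto
  from cov i have Xi: "X i \<subseteq> verts H'" and "C_colorable C0 (induced H' (X i))"
    unfolding C_covering_def by auto
  then obtain c where c: "C_coloring C0 (induced H' (X i)) c" unfolding C_colorable_def by auto
  have f2: "graph_hom (induced H (f -` X i \<inter> verts H)) (induced H' (X i)) f"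
    by (rule hom_induced[OF f]) auto
  have h2: "graph_hom (induced H' (X i)) C0 h" by (rule hom_induced2[OF h Xi])
  have "C_coloring C0 (induced H (f -` X i \<inter> verts H)) (c \<circ> f)"
    unfolding C_coloring_def
  proof (intro conjI allI impI)
    show "(c \<circ> f) ` verts (induced H (f -` X i \<inter> verts H)) \<subseteq> {1..card (verts C0)}"
      using c unfolding C_coloring_def induced_def by auto
  next
    fix K assume K: "is_copy C0 (induced H (f -` X i \<inter> verts H)) K"
    from copy_image[OF rig f2 h2 K] have finj: "inj_on f (verts K)"
      and cp: "is_copy C0 (induced H' (X i)) \<lparr>verts = f ` verts K, edges = (`) f ` edges K\<rparr>" by auto
    from c cp have "inj_on c (f ` verts K)" unfolding C_coloring_def by fastforce
    then show "inj_on (c \<circ> f) (verts K)" using finj by (simp add: comp_inj_on)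
  qed
  then show "C_colorable C0 (induced H (f -` X i \<inter> verts H))" unfolding C_colorable_def by blast
next
  fix K assume K: "is_copy C0 H K"
  from copy_image[OF rig f h K] have
      cp: "is_copy C0 H' \<lparr>verts = f ` verts K, edges = (`) f ` edges K\<rparr>" by auto
  then obtain i where i: "i < r" and sub: "subgraph \<lparr>verts = f ` verts K, edges = (`) f ` edges K\<rparr> (induced H' (X i))"
    using cov unfolding C_covering_def by blast
  have subK: "subgraph K H" using K unfolding is_copy_def by auto
  then have wfK: "wf_graph K" unfolding subgraph_def by auto
  have "subgraph K (induced H (f -` X i \<inter> verts H))" unfolding subgraph_def
  proof (intro conjI wfK subsetI)
    fix v assume v: "v \<in> verts K"
    then have "f v \<in> X i" using sub unfolding subgraph_def induced_def by auto
    then show "v \<in> verts (induced H (f -` X i \<inter> verts H))"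
      using v subK unfolding subgraph_def induced_def by auto
  next
    fix e assume e: "e \<in> edges K"
    then have "e \<subseteq> verts K" using wf_edge[OF wfK e] by auto
    moreover have "\<forall>v\<in>verts K. f v \<in> X i" using sub unfolding subgraph_def induced_def by auto
    ultimately show "e \<in> edges (induced H (f -` X i \<inter> verts H))"
      using e subK unfolding subgraph_def induced_def by auto
  qed
  then show "\<exists>i<r. subgraph K (induced H (f -` X i \<inter> verts H))" using i by blast
qed

lemma covset_mono:
  assumes "rigid C0" "graph_hom H H' f" "graph_hom H' C0 h"
  shows "{r. \<exists>X. C_covering C0 H' X r} \<subseteq> {r. \<exists>X. C_covering C0 H X r}"
  using pullback[OF assms] by blast


lemma core_iso:
  assumes c1: "is_core C H" and c2: "is_core C' H'"
    and hh: "homomorphic H H'" and hh': "homomorphic H' H"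
  shows "graph_iso C C'"
proof -
  from c1 obtain h where h: "graph_hom H C h" and s1: "subgraph C H"
    unfolding is_core_def homomorphic_def by blast
  from c2 obtain h' where h': "graph_hom H' C' h'" and s2: "subgraph C' H'"
    unfolding is_core_def homomorphic_def by blast
  from hh obtain f where f: "graph_hom H H' f" unfolding homomorphic_def by blast
  from hh' obtain f' where f': "graph_hom H' H f'" unfolding homomorphic_def by blast
  have a: "graph_hom C C' (h' \<circ> (f \<circ> id))" by (rule hom_comp[OF hom_comp[OF hom_sub[OF s1] f] h'])
  have b: "graph_hom C' C (h \<circ> (f' \<circ> id))" by (rule hom_comp[OF hom_comp[OF hom_sub[OF s2] f'] h])
  define A where "A = h' \<circ> f \<circ> id"
  define B where "B = h \<circ> f' \<circ> id"
  have a: "graph_hom C C' A" using a A_def by simp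
  have b: "graph_hom C' C B" using b B_def by simp
  have r1: "rigid C" by (rule core_rigid[OF c1])
  have r2: "rigid C'" by (rule core_rigid[OF c2])
  from r1 hom_comp[OF a b] have ba_inj: "inj_on (B \<circ> A) (verts C)"
    and ba_E: "\<forall>u\<in>verts C. \<forall>v\<in>verts C. {(B \<circ> A) u, (B \<circ> A) v} \<in> edges C \<longrightarrow> {u,v} \<in> edges C"
    unfolding rigid_def by blast+
  from r2 hom_comp[OF b a] have ab_V: "(A \<circ> B) ` verts C' = verts C'"
    unfolding rigid_def by blast
  have aV: "A ` verts C \<subseteq> verts C'" using a unfolding graph_hom_def by auto
  have bV: "B ` verts C' \<subseteq> verts C" using b unfolding graph_hom_def by auto
  have aE: "\<And>u v. {u,v} \<in> edges C \<Longrightarrow> {A u, A v} \<in> edges C'" using a unfolding graph_hom_def by auto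
  have bE: "\<And>u v. {u,v} \<in> edges C' \<Longrightarrow> {B u, B v} \<in> edges C" using b unfolding graph_hom_def by auto
  show ?thesis unfolding graph_iso_def
  proof (intro exI conjI)
    show "bij_betw A (verts C) (verts C')" unfolding bij_betw_def
    proof
      show "inj_on A (verts C)" using ba_inj inj_on_imageI2 by blast
      have "verts C' = A ` B ` verts C'" using ab_V by (simp add: image_comp)
      also have "\<dots> \<subseteq> A ` verts C" using bV by (rule image_mono)
      finally show "A ` verts C = verts C'" using aV by blast
    qed
    show "\<forall>u\<in>verts C. \<forall>v\<in>verts C. ({u, v} \<in> edges C) = ({A u, A v} \<in> edges C')"
    proof (intro ballI iffI)
      fix u v assume "{u, v} \<in> edges C" then show "{A u, A v} \<in> edges C'" by (rule aE)
    next
      fix u v assume uv: "u \<in> verts C" "v \<in> verts C" and "{A u, A v} \<in> edges C'"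
      then have "{(B \<circ> A) u, (B \<circ> A) v} \<in> edges C" using bE by simp
      then show "{u, v} \<in> edges C" using ba_E uv by blast
    qed
  qed
qed

lemma hom_chain:
  assumes "\<forall>j<s. homomorphic (H j) (H (Suc j mod s))" and "i < s"
  shows "homomorphic (H i) (H ((i + k) mod s))"
proof (induction k)
  case 0
  then show ?case using assms hom_id unfolding homomorphic_def by auto
next
  case (Suc k)
  have "s > 0" using assms by auto
  then have "homomorphic (H ((i + k) mod s)) (H (Suc ((i + k) mod s) mod s))" using assms by auto
  also have "Suc ((i + k) mod s) mod s = (i + Suc k) mod s" by (simp add: mod_Suc_eq)
  finally have "homomorphic (H ((i + k) mod s)) (H ((i + Suc k) mod s))" .
  then show ?case using Suc hom_comp unfolding homomorphic_def by blast
qed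

lemma hom_all:
  assumes "\<forall>j<s. homomorphic (H j) (H (Suc j mod s))" and "i < s" "j < s"
  shows "homomorphic (H i) (H j)"
proof -
  have "(i + (j + s - i)) mod s = j" using assms by simp
  then show ?thesis using hom_chain[OF assms(1,2), of "j + s - i"] by simp
qed

theorem lemma14:
  fixes H Cs :: "nat \<Rightarrow> 'a ugraph" and s :: nat
  assumes "\<forall>j<s. wf_graph (H j)"
    and "\<forall>j<s. is_core (Cs j) (H j)"
    and "\<forall>j<s. homomorphic (H j) (H (Suc j mod s))"
  shows "\<exists>C :: 'a ugraph. (\<forall>j<s. graph_iso (Cs j) C) \<and>
           (\<forall>i<s. \<forall>j<s. covering_number C (H i) = covering_number C (H j))"
proof (cases "s = 0")
  case True then show ?thesis by auto
next
  case False
  then have s0: "0 < s" by auto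
  have hom: "\<And>i j. i < s \<Longrightarrow> j < s \<Longrightarrow> homomorphic (H i) (H j)"
    using hom_all assms(3) by blast
  have rig: "rigid (Cs 0)" using core_rigid assms(2) s0 by blast
  obtain h0 where h0: "graph_hom (H 0) (Cs 0) h0"
    using assms(2) s0 unfolding is_core_def homomorphic_def by blast
  have toC: "\<And>k. k < s \<Longrightarrow> \<exists>h. graph_hom (H k) (Cs 0) h"
  proof -
    fix k assume "k < s"
    then obtain f where "graph_hom (H k) (H 0) f" using hom s0 unfolding homomorphic_def by blast
    then show "\<exists>h. graph_hom (H k) (Cs 0) h" using hom_comp h0 by blast
  qed
  have sets: "\<And>i j. i < s \<Longrightarrow> j < s \<Longrightarrow>
     {r. \<exists>X. C_covering (Cs 0) (H j) X r} \<subseteq> {r. \<exists>X. C_covering (Cs 0) (H i) X r}"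
  proof -
    fix i j assume "i < s" "j < s"
    then obtain f where f: "graph_hom (H i) (H j) f" using hom unfolding homomorphic_def by blast
    obtain h where h: "graph_hom (H j) (Cs 0) h" using toC \<open>j < s\<close> by blast
    show "{r. \<exists>X. C_covering (Cs 0) (H j) X r} \<subseteq> {r. \<exists>X. C_covering (Cs 0) (H i) X r}"
      by (rule covset_mono[OF rig f h])
  qed
  show ?thesis
  proof (intro exI conjI allI impI)
    fix j assume "j < s"
    then show "graph_iso (Cs j) (Cs 0)" using core_iso[of "Cs j" "H j" "Cs 0" "H 0"] assms(2) hom[of j 0] hom[of 0 j] s0 by simp
  next
    fix i j assume "i < s" "j < s"
    then have "{r. \<exists>X. C_covering (Cs 0) (H j) X r} = {r. \<exists>X. C_covering (Cs 0) (H i) X r}"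
      using sets by blast
    then have e: "(\<lambda>r. \<exists>X. C_covering (Cs 0) (H j) X r) = (\<lambda>r. \<exists>X. C_covering (Cs 0) (H i) X r)"
      by (rule Collect_inj)
    show "covering_number (Cs 0) (H i) = covering_number (Cs 0) (H j)"
      unfolding covering_number_def e ..
  qed
qed

end
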